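(* Let $n\ge1$, $D\ge1$, and let $X_n=\{\mathbf{x}^0,\ldots,\mathbf{x}^{n-1}\}\subseteq\{0,1\}^D$ consist of $n$ pairwise distinct vectors, indexed so that $\mathbf{a}\cdot\mathbf{x}^0<\cdots<\mathbf{a}\cdot\mathbf{x}^{n-1}$ for some $\mathbf{a}\in\mathbb{Z}^D$. Then there is a four-layer Boolean threshold network with $D$ input nodes, $3\lceil\sqrt n\rceil+D$ hidden nodes in total (in layers $2$ and $3$), and $\lceil\log_2 n\rceil$ output nodes that maps $\mathbf{x}^i$ to the $\lceil\log_2 n\rceil$-dimensional binary representation of $i$, for every $i=0,\ldots,n-1$.
   Context: A Boolean threshold function is a map $\{0,1\}^h\to\{0,1\}$, $\mathbf{u}\mapsto[\mathbf{w}\cdot\mathbf{u}\ge\theta]$ (value $1$ iff $\mathbf{w}\cdot\mathbf{u}\ge\theta$) with $\mathbf{w}\in\mathbb{Z}^h,\theta\in\mathbb{Z}$. An $L$-layer Boolean threshold network has layers $1,\ldots,L$; layer $1$ is the input; each node of layer $t+1$ computes a Boolean threshold function of the values of layer $t$; the network computes the map input $\mapsto$ values of layer $L$; layers $2,\ldots,L-1$ are hidden. *)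

theory Defs
  imports Complex_Main
begin

text \<open>A Boolean vector in {0,1}^h is a function nat => bool, of which only the
  entries at indices < h matter.\<close>

definition threshold_fn :: "nat \<Rightarrow> (nat \<Rightarrow> int) \<Rightarrow> int \<Rightarrow> (nat \<Rightarrow> bool) \<Rightarrow> bool" where
  "threshold_fn h w \<theta> u \<longleftrightarrow> (\<Sum>j<h. w j * of_bool (u j)) \<ge> \<theta>"

text \<open>A layer transition: node k of the next layer uses weights W k and threshold th k.
  A network is given by the list of layer widths ws (layer 1 = input, last = output)
  and a list of length (length ws - 1) of layer transitions.\<close>

type_synonym layer = "(nat \<Rightarrow> nat \<Rightarrow> int) \<times> (nat \<Rightarrow> int)"

fun net_eval :: "nat list \<Rightarrow> layer list \<Rightarrow> (nat \<Rightarrow> bool) \<Rightarrow> (nat \<Rightarrow> bool)" where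
  "net_eval (h # h' # hs) ((W, th) # ls) u =
     net_eval (h' # hs) ls (\<lambda>k. threshold_fn h (W k) (th k) u)"
| "net_eval _ _ u = u"

definition threshold_network :: "nat list \<Rightarrow> layer list \<Rightarrow> bool" where
  "threshold_network ws ls \<longleftrightarrow> ws \<noteq> [] \<and> length ls = length ws - 1"

end

theory Submission
  imports Defs
begin

lemma sum_window:
  fixes F :: "nat \<Rightarrow> int"
  assumes "m + l \<le> d"
  shows "(\<Sum>j<d. if m \<le> j \<and> j < m + l then F (j - m) else 0) = (\<Sum>r<l. F r)"
proof -
  have "(\<Sum>j<d. if m \<le> j \<and> j < m + l then F (j - m) else 0)
      = (\<Sum>j\<in>{m..<m+l}. if m \<le> j \<and> j < m + l then F (j - m) else 0)"
    by (rule sum.mono_neutral_right) (use assms in auto)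
  also have "\<dots> = (\<Sum>j\<in>{m..<m+l}. F (j - m))" by (rule sum.cong) auto
  also have "\<dots> = (\<Sum>r\<in>{0..<l}. F r)"
    using sum.shift_bounds_nat_ivl[of "\<lambda>j. F (j - m)" 0 m l] by (simp add: add.commute)
  finally show ?thesis by (simp add: atLeast0LessThan)
qed

lemma sum_prefix:
  fixes g :: "nat \<Rightarrow> int"
  assumes "q \<le> m"
  shows "(\<Sum>j<m. g j * of_bool (j < q)) = (\<Sum>j<q. g j)"
proof -
  have "(\<Sum>j<m. g j * of_bool (j < q)) = (\<Sum>j<m. if j < q then g j else 0)"
    by (rule sum.cong) auto
  also have "\<dots> = (\<Sum>j<q. g j)"
  proof -
    have "(\<Sum>j<m. if j < q then g j else 0) = sum g {j\<in>{..<m}. j < q}"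
      by (rule sum.inter_filter[symmetric]) simp
    also have "{j\<in>{..<m}. j < q} = {..<q}" using assms by auto
    finally show ?thesis .
  qed
  finally show ?thesis .
qed

lemma bits_tele:
  assumes "r \<le> l"
  shows "(\<Sum>j<l. (of_bool (bit (j+1) k) - of_bool (bit j k) :: int) * of_bool (j < r))
         = of_bool (bit (r::nat) k)"
proof -
  have "(\<Sum>j<l. (of_bool (bit (j+1) k) - of_bool (bit j k) :: int) * of_bool (j < r))
     = (\<Sum>j<r. (of_bool (bit (Suc j) k) - of_bool (bit j k) :: int))"
    using sum_prefix[OF assms] by simp
  also have "\<dots> = of_bool (bit r k) - of_bool (bit (0::nat) k)"
    by (rule sum_lessThan_telescope)
  finally show ?thesis by simp
qed

lemma pow2_between:
  assumes "(s::nat) \<ge> 1"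
  shows "\<exists>t. s \<le> 2^t \<and> 2^t < 2*s"
proof -
  have ex: "\<exists>t. s \<le> 2^t" using less_exp[of s] less_imp_le by blast
  define t where "t = (LEAST t. s \<le> (2::nat)^t)"
  have st: "s \<le> 2^t" unfolding t_def by (rule LeastI_ex[OF ex])
  show ?thesis
  proof (cases t)
    case 0 then show ?thesis using st assms by (intro exI[of _ t]) auto
  next
    case (Suc t')
    have "\<not> s \<le> 2^t'" using Suc not_less_Least[of t' "\<lambda>t. s \<le> (2::nat)^t"] t_def by auto
    then show ?thesis using st Suc by (intro exI[of _ t]) auto
  qed
qed


lemma sum_split_add:
  fixes f :: "nat \<Rightarrow> int"
  shows "(\<Sum>j<D+m. f j) = (\<Sum>j<D. f j) + (\<Sum>q<m. f (D+q))"
  by (induction m) (simp_all add: add.assoc)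

lemma sum_delta_of_bool:
  fixes h j0 :: nat
  assumes "j0 < h"
  shows "(\<Sum>j<h. (if j = j0 then 1 else 0) * of_bool (u j) :: int) = of_bool (u j0)"
proof -
  have "(\<Sum>j<h. (if j = j0 then 1 else 0) * of_bool (u j) :: int)
      = (\<Sum>j<h. if j = j0 then of_bool (u j) else 0)" by (rule sum.cong) auto
  also have "\<dots> = of_bool (u j0)" using assms by (subst sum.delta) auto
  finally show ?thesis .
qed

lemma size_bound:
  fixes m b s n :: nat
  assumes "m * b \<le> n - 1" "n \<le> s * s" "s \<le> b" "b < 2 * s" "n \<ge> 1"
  shows "2 * m + b < 3 * s"
proof -
  have "(int b - int s) * (int b - 2 * int s) \<le> 0"
    by (rule mult_nonneg_nonpos) (use assms in auto)
  moreover have "(int b - int s) * (int b - 2 * int s) = int b * int b + 2 * (int s * int s) - 3 * (int s * int b)"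
    by algebra
  ultimately have h1: "int b * int b + 2 * (int s * int s) \<le> 3 * (int s * int b)" by linarith
  have "int m * int b \<le> int n - 1" using assms(1,5) by (metis of_nat_diff of_nat_le_iff of_nat_mult of_nat_1)
  moreover have "int n \<le> int s * int s" using assms(2) by (metis of_nat_le_iff of_nat_mult)
  ultimately have "(int (2*m+b)) * int b < (int (3*s)) * int b"
    using h1 by (simp add: algebra_simps)
  then have "int (2*m+b) < int (3*s)" by (simp add: mult_less_cancel_right)
  then show ?thesis by linarith
qed

theorem theorem15:
  fixes n D :: nat and x :: "nat \<Rightarrow> nat \<Rightarrow> bool" and a :: "nat \<Rightarrow> int"
  assumes "n \<ge> 1" and "D \<ge> 1"
    and distinct: "\<And>i i'. i < n \<Longrightarrow> i' < n \<Longrightarrow> i \<noteq> i' \<Longrightarrow> (\<exists>j<D. x i j \<noteq> x i' j)"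
    and order: "\<And>i i'. i < i' \<Longrightarrow> i' < n \<Longrightarrow>
                 (\<Sum>j<D. a j * of_bool (x i j)) < (\<Sum>j<D. a j * of_bool (x i' j))"
  shows "\<exists>d2 d3 ls.
           threshold_network [D, d2, d3, nat \<lceil>log 2 (real n)\<rceil>] ls \<and>
           d2 + d3 = 3 * nat \<lceil>sqrt (real n)\<rceil> + D \<and>
           (\<forall>i<n. \<forall>k<nat \<lceil>log 2 (real n)\<rceil>.
              net_eval [D, d2, d3, nat \<lceil>log 2 (real n)\<rceil>] ls (x i) k = bit i k)"
proof -
  define v where "v = (\<lambda>u::nat\<Rightarrow>bool. \<Sum>j<D. a j * of_bool (u j))"
  define V where "V = (\<lambda>m. if m < n then v (x m) else v (x (n-1)) + 1)"
  have mono: "v (x i) < v (x i')" if "i < i'" "i' < n" for i i'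
    using order[OF that] by (simp add: v_def)
  have mono_le: "v (x i) \<le> v (x i')" if "i \<le> i'" "i' < n" for i i'
    using mono[of i i'] that by (cases "i = i'") auto
  have key: "(V m \<le> v (x i)) = (m \<le> i)" if "i < n" for i m
  proof (cases "m < n")
    case True
    then show ?thesis using that mono[of i m] mono_le[of m i] by (cases "i < m") (auto simp: V_def)
  next
    case False
    have "v (x i) \<le> v (x (n-1))" using mono_le[of i "n-1"] that by simp
    then show ?thesis using False that by (auto simp: V_def)
  qed
  define s where "s = nat \<lceil>sqrt (real n)\<rceil>"
  have sqrt1: "sqrt (real n) \<ge> 1" using assms(1) by simp
  have rs: "real s = of_int \<lceil>sqrt (real n)\<rceil>"
    unfolding s_def using sqrt1 by (simp add: of_nat_nat)
  have s1: "s \<ge> 1" using sqrt1 rs by (metis ceiling_le_zero not_le of_int_0 of_nat_le_iff of_nat_1 le_of_int_ceiling dual_order.trans one_le_ceiling s_def nat_mono nat_one_as_int)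
  have sq: "sqrt (real n) \<le> real s" using rs by simp
  have "real n = sqrt (real n) * sqrt (real n)" by simp
  also have "\<dots> \<le> real s * real s" by (rule mult_mono) (use sq in auto)
  finally have "real n \<le> real s * real s" .
  then have sn: "n \<le> s * s" by (metis of_nat_le_iff of_nat_mult)
  obtain t where t: "s \<le> 2^t" "2^t < 2*s" using pow2_between[OF s1] by blast
  define b where "b = (2::nat)^t"
  have b0: "b > 0" by (simp add: b_def)
  define m where "m = (n-1) div b"
  have mb: "m * b \<le> n - 1" unfolding m_def by (rule div_times_less_eq_dividend)
  have bnd: "2 * m + b < 3 * s"
    by (rule size_bound[OF mb sn]) (use t assms(1) b_def in auto)
  define L where "L = nat \<lceil>log 2 (real n)\<rceil>"
  define d2 where "d2 = D + m"
  define d3 where "d3 = 3 * s - m"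
  define W1 where "W1 = (\<lambda>k j. if k < D then (if j = k then 1 else 0) else a j :: int)"
  define t1 where "t1 = (\<lambda>k. if k < D then 1 else V ((k - D + 1) * b))"
  define \<Delta> where "\<Delta> = (\<lambda>r q. V ((q+1)*b + r + 1) - V (q*b + r + 1))"
  define W2 where "W2 = (\<lambda>k j. if k < m then (if j = D + k then 1 else 0)
                          else if j < D then a j else - \<Delta> (k - m) (j - D))"
  define t2 where "t2 = (\<lambda>k. if k < m then 1 else V (k - m + 1))"
  define c where "c = (\<lambda>k r. of_bool (bit (r+1) k) - of_bool (bit (r::nat) k) :: int)"
  define W3 where "W3 = (\<lambda>k j. if k < t then (if m \<le> j \<and> j < m + (b-1) then c k (j - m) else 0)
                          else (if 0 \<le> j \<and> j < 0 + m then c (k - t) (j - 0) else 0))"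
  define t3 where "t3 = (\<lambda>k::nat. 1::int)"
  define ls where "ls = [(W1, t1), (W2, t2), (W3, t3)]"
  have "\<forall>i<n. \<forall>k<L. net_eval [D, d2, d3, L] ls (x i) k = bit i k"
  proof (intro allI impI)
    fix i k assume i: "i < n" and k: "k < L"
    define q where "q = i div b"
    define r where "r = i mod b"
    have qm: "q \<le> m" unfolding q_def m_def using i by (intro div_le_mono) auto
    have rb: "r < b" unfolding r_def using b0 by simp
    have ir: "i = q * b + r" unfolding q_def r_def by simp
    define h2 where "h2 = (\<lambda>j. threshold_fn D (W1 j) (t1 j) (x i))"
    have h2_lo: "h2 j = x i j" if "j < D" for j
      using sum_delta_of_bool[OF that, of "x i"] that
      by (simp add: h2_def threshold_fn_def W1_def t1_def)
    have h2_hi: "h2 (D + q') = (q' < q)" for q'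
    proof -
      have "h2 (D + q') = (V ((q'+1)*b) \<le> v (x i))"
        by (simp add: h2_def threshold_fn_def W1_def t1_def v_def)
      also have "\<dots> = ((q'+1)*b \<le> i)" using key[OF i] .
      also have "\<dots> = (q'+1 \<le> q)" unfolding q_def using less_eq_div_iff_mult_less_eq[OF b0] by simp
      finally show ?thesis by linarith
    qed
    define h3 where "h3 = (\<lambda>j. threshold_fn d2 (W2 j) (t2 j) h2)"
    have h3_lo: "h3 j = (j < q)" if "j < m" for j
    proof -
      have "D + j < d2" using that d2_def by simp
      from sum_delta_of_bool[OF this, of h2] show ?thesis
        using that h2_hi by (simp add: h3_def threshold_fn_def W2_def t2_def)
    qed
    have h3_hi: "h3 (m + r') = (r' < r)" for r'
    proof -
      have "(\<Sum>j<d2. W2 (m + r') j * of_bool (h2 j))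
          = (\<Sum>j<D. a j * of_bool (x i j)) + (\<Sum>q'<m. - \<Delta> r' q' * of_bool (q' < q))"
        unfolding d2_def sum_split_add by (simp add: W2_def h2_lo h2_hi)
      also have "(\<Sum>q'<m. - \<Delta> r' q' * of_bool (q' < q)) = (\<Sum>q'<q. - \<Delta> r' q')"
        by (rule sum_prefix[OF qm])
      also have "\<dots> = - (\<Sum>q'<q. V (Suc q' * b + r' + 1) - V (q' * b + r' + 1))"
        by (simp add: \<Delta>_def sum_subtractf)
      also have "(\<Sum>q'<q. V (Suc q' * b + r' + 1) - V (q' * b + r' + 1)) = V (q*b + r' + 1) - V (0*b + r' + 1)"
        by (rule sum_lessThan_telescope[where f = "\<lambda>q'. V (q' * b + r' + 1)"])
      finally have "(\<Sum>j<d2. W2 (m + r') j * of_bool (h2 j)) = v (x i) - (V (q*b + r' + 1) - V (r' + 1))"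
        by (simp add: v_def)
      then have "h3 (m + r') = (V (q*b + r' + 1) \<le> v (x i))"
        by (simp add: h3_def threshold_fn_def t2_def)
      also have "\<dots> = (q*b + r' + 1 \<le> i)" using key[OF i] .
      also have "\<dots> = (r' < r)" using ir by linarith
      finally show ?thesis .
    qed
    have h3_hi': "h3 j = (j - m < r)" if "m \<le> j" for j
      using h3_hi[of "j - m"] that by simp
    have d3b: "m + (b - 1) \<le> d3" using bnd d3_def by linarith
    have out: "net_eval [D, d2, d3, L] ls (x i) k = (1 \<le> (\<Sum>j<d3. W3 k j * of_bool (h3 j)))"
      by (simp add: ls_def h3_def h2_def threshold_fn_def t3_def)
    show "net_eval [D, d2, d3, L] ls (x i) k = bit i k"
    proof (cases "k < t")
      case True
      have "(\<Sum>j<d3. W3 k j * of_bool (h3 j))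
          = (\<Sum>j<d3. if m \<le> j \<and> j < m + (b-1) then c k (j - m) * of_bool (j - m < r) else 0)"
        by (rule sum.cong) (auto simp: W3_def True h3_hi')
      also have "\<dots> = (\<Sum>r'<b-1. c k r' * of_bool (r' < r))"
        by (rule sum_window[OF d3b])
      also have "\<dots> = of_bool (bit r k)"
        unfolding c_def by (rule bits_tele) (use rb in linarith)
      finally have "net_eval [D, d2, d3, L] ls (x i) k = bit r k" using out by simp
      also have "bit r k = bit i k"
        unfolding r_def b_def using True by (simp add: bit_take_bit_iff flip: take_bit_eq_mod)
      finally show ?thesis .
    next
      case False
      have d3m: "0 + m \<le> d3" using bnd d3_def by linarith
      have "(\<Sum>j<d3. W3 k j * of_bool (h3 j))
          = (\<Sum>j<d3. if 0 \<le> j \<and> j < 0 + m then c (k - t) (j - 0) * of_bool (j - 0 < q) else 0)"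
        by (rule sum.cong) (auto simp: W3_def False h3_lo)
      also have "\<dots> = (\<Sum>r'<m. c (k - t) r' * of_bool (r' < q))"
        by (rule sum_window[OF d3m])
      also have "\<dots> = of_bool (bit q (k - t))"
        unfolding c_def by (rule bits_tele[OF qm])
      finally have "net_eval [D, d2, d3, L] ls (x i) k = bit q (k - t)" using out by simp
      also have "bit q (k - t) = bit i k"
        unfolding q_def b_def using False by (simp add: bit_drop_bit_eq flip: drop_bit_eq_div)
      finally show ?thesis .
    qed
  qed
  moreover have "threshold_network [D, d2, d3, L] ls" by (simp add: threshold_network_def ls_def)
  moreover have "d2 + d3 = 3 * s + D" using bnd by (simp add: d2_def d3_def)
  ultimately show ?thesis unfolding L_def s_def by blast
qed

end
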